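(* For every integer $q'\ge2$, the network $\mathcal{N}_2$ (with parameter $q'$) has no scalar linear network coding (1-dimensional VLNC) solution over any finite field.
   Context: Vector linear network coding: each source $v$ generates $x_v\in F^d$; an edge out of a source $v$ carries $Ax_v$ for a $d\times d$ matrix $A$ over $F$; an edge out of an intermediate node carries $\sum A_{e',e}y_{e'}$ over the edges $e'$ entering that node; a terminal computes vectors $\sum B_ey_e$ over its incoming edges; a $d$-dimensional VLNC solution over $F$ is such a code with which every terminal computes each demanded message for all message choices. The Char-$q$-$s$ network (integer $q\ge2$): sources $s,x_1,\dots,x_{q+2}$; intermediate nodes $m_1,\dots,m_{q+3},n_1,\dots,n_{q+3}$; terminals $r_1,\dots,r_{q+3}$; edges: $(x_1,m_i)$ for $1\le i\le q+1$; $(s,m_1)$ and $(s,m_i)$ for $4\le i\le q+3$; $(x_i,m_j)$ for $2\le i,j\le q+2$, $i\ne j$; $(x_i,m_{q+3})$ for $1\le i\le q+2$; $e_i=(m_i,n_i)$ for $1\le i\le q+3$; $(n_i,r_i)$ for $1\le i\le q+2$; $(n_{q+3},r_i)$ and $(n_i,r_{q+3})$ for $1\le i\le q+2$; $(x_i,r_1)$ for $2\le i\le q+1$; $(x_1,r_{q+2})$; $(s,r_2)$; $(s,r_3)$. Demands: $r_1$ demands $x_{q+2}$; $r_i$ demands $x_i$ for $2\le i\le q+2$; $r_{q+3}$ demands $x_1$; no terminal demands $s$. The generalized M-network $\mathcal{M}_3$: sources in three groups $G_1=(\bar a,\bar b,\bar c)$, $G_2=(\bar r,\bar s,\bar w)$,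 $G_3=(\bar x,\bar y,\bar z)$; intermediate nodes $\bar u_1,\bar u_2,\bar u_3,\bar v_1,\dots,\bar v_5$; edges from each source of $G_i$ to $\bar u_i$, edges $(\bar u_i,\bar v_i),(\bar u_i,\bar v_4),(\bar u_i,\bar v_5)$ for $i=1,2,3$, and $(\bar v_i,\bar t_j)$ for $1\le i\le5$, $1\le j\le27$; terminals $\bar t_1,\dots,\bar t_{27}$, where $\bar t_j$ demands the $j$-th triple in the lexicographic order of $G_1\times G_2\times G_3$ (e.g. $\bar t_1$: $\bar a,\bar r,\bar x$; $\bar t_2$: $\bar a,\bar r,\bar y$; $\bar t_4$: $\bar a,\bar s,\bar x$; $\bar t_{25}$: $\bar c,\bar w,\bar x$; $\bar t_{27}$: $\bar c,\bar w,\bar z$). The network $\mathcal{N}_2$ (integer $q'\ge2$) is obtained from the disjoint union of $\mathcal{M}_3$ and a copy of the Char-$q'$-$s$ network (nodes renamed $\bar m_i,\bar n_i$, terminals $\rho_i$, edges $\bar e_i=(\bar m_i,\bar n_i)$, sources $x_i$ renamed $\bar x_i$ for $2\le i\le q'+2$) by identifying $x_1$ with $\bar a$ and $s$ with $\bar x$ (so $\rho_{q'+3}$ demands $\bar a$), and adding the edges: $(\bar w,\bar t_j)$ for $j\in\{7,8,9,16,17,18\}$; $(\bar c,\bar t_j)$ for $19\le j\le24$; $(\bar a,\bar t_{25})$; $(\bar y,\bar t_{26})$; $(\bar n_1,\bar t_{25})$. All other demands are unchanged. *)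

theory Defs
  imports "HOL-Analysis.Finite_Cartesian_Product"
begin

text \<open>A network is given by a set of source nodes, a set of (directed) edges, which are
pairs of nodes, and a demand function assigning to each node the set of sources it demands
(empty for non-terminals).  Messages are vectors in F^d, represented as 'f^'d with d = CARD('d);
coding matrices are d x d matrices 'f^'d^'d.
A code consists of:
 Asrc e      : matrix on an edge e leaving a source, carrying Asrc e *v x (tail e);
 Aint e' e   : local coefficient matrix from incoming edge e' to outgoing edge e at a
               non-source node;
 B t v e     : decoding matrix used by terminal t on its incoming edge e for demanded source v.\<close>

definition vlnc_equations ::
  "'v set \<Rightarrow> ('v \<times> 'v) set \<Rightarrow> (('v \<times> 'v) \<Rightarrow> 'f::semiring_1^'d^'d)
   \<Rightarrow> (('v \<times> 'v) \<Rightarrow> ('v \<times> 'v) \<Rightarrow> 'f^'d^'d) \<Rightarrow> ('v \<Rightarrow> 'f^'d) \<Rightarrow> (('v \<times> 'v) \<Rightarrow> 'f^'d) \<Rightarrow> bool"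
  where
  "vlnc_equations S E Asrc Aint x y \<longleftrightarrow>
     (\<forall>e\<in>E. fst e \<in> S \<longrightarrow> y e = Asrc e *v x (fst e)) \<and>
     (\<forall>e\<in>E. fst e \<notin> S \<longrightarrow>
        y e = (\<Sum>e'\<in>{e'\<in>E. snd e' = fst e}. Aint e' e *v y e'))"

definition vlnc_solution ::
  "'v set \<Rightarrow> ('v \<times> 'v) set \<Rightarrow> ('v \<Rightarrow> 'v set) \<Rightarrow> (('v \<times> 'v) \<Rightarrow> 'f::semiring_1^'d^'d)
   \<Rightarrow> (('v \<times> 'v) \<Rightarrow> ('v \<times> 'v) \<Rightarrow> 'f^'d^'d) \<Rightarrow> ('v \<Rightarrow> 'v \<Rightarrow> ('v \<times> 'v) \<Rightarrow> 'f^'d^'d) \<Rightarrow> bool"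
  where
  "vlnc_solution S E dem Asrc Aint B \<longleftrightarrow>
     (\<forall>x y. vlnc_equations S E Asrc Aint x y \<longrightarrow>
        (\<forall>t. \<forall>v\<in>dem t. (\<Sum>e\<in>{e\<in>E. snd e = t}. B t v e *v y e) = x v))"

definition vlnc_solvable ::
  "'v set \<Rightarrow> ('v \<times> 'v) set \<Rightarrow> ('v \<Rightarrow> 'v set) \<Rightarrow> 'f::field itself \<Rightarrow> 'd::finite itself \<Rightarrow> bool"
  where
  "vlnc_solvable S E dem (_::'f itself) (_::'d itself) \<longleftrightarrow>
     (\<exists>(Asrc :: ('v \<times> 'v) \<Rightarrow> 'f^'d^'d) Aint B. vlnc_solution S E dem Asrc Aint B)"

text \<open>G1 = (a,b,c) = Ga 1, Ga 2, Ga 3; G2 = (r,s,w) = Gb 1..3; G3 = (x,y,z) = Gc 1..3;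
U i = u_i, V i = v_i, T j = t_j.  Char-q'-s copy: Xb i = x_i (2 <= i <= q'+2), Mb i, Nb i,
Rho i.  The identifications x_1 = a and s = x (bar) are built in: x_1 is Ga 1, s is Gc 1.\<close>

datatype node = Ga nat | Gb nat | Gc nat | U nat | V nat | T nat
  | Xb nat | Mb nat | Nb nat | Rho nat

definition grp :: "nat \<Rightarrow> nat \<Rightarrow> node" where
  "grp i j = (if i = 1 then Ga j else if i = 2 then Gb j else Gc j)"

definition cx :: "nat \<Rightarrow> node" where
  "cx i = (if i = 1 then Ga 1 else Xb i)"

abbreviation cs :: node where "cs \<equiv> Gc 1"

definition N2_sources :: "nat \<Rightarrow> node set" where
  "N2_sources q = {grp i j | i j. i \<in> {1,2,3} \<and> j \<in> {1,2,3}} \<union> {Xb i | i. 2 \<le> i \<and> i \<le> q + 2}"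

definition char_edges :: "nat \<Rightarrow> (node \<times> node) set" where
  "char_edges q =
     {(cx 1, Mb i) | i. 1 \<le> i \<and> i \<le> q + 1}
   \<union> {(cs, Mb 1)} \<union> {(cs, Mb i) | i. 4 \<le> i \<and> i \<le> q + 3}
   \<union> {(cx i, Mb j) | i j. 2 \<le> i \<and> i \<le> q + 2 \<and> 2 \<le> j \<and> j \<le> q + 2 \<and> i \<noteq> j}
   \<union> {(cx i, Mb (q + 3)) | i. 1 \<le> i \<and> i \<le> q + 2}
   \<union> {(Mb i, Nb i) | i. 1 \<le> i \<and> i \<le> q + 3}
   \<union> {(Nb i, Rho i) | i. 1 \<le> i \<and> i \<le> q + 2}
   \<union> {(Nb (q + 3), Rho i) | i. 1 \<le> i \<and> i \<le> q + 2}
   \<union> {(Nb i, Rho (q + 3)) | i. 1 \<le> i \<and> i \<le> q + 2}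
   \<union> {(cx i, Rho 1) | i. 2 \<le> i \<and> i \<le> q + 1}
   \<union> {(cx 1, Rho (q + 2))}
   \<union> {(cs, Rho 2), (cs, Rho 3)}"

definition M3_edges :: "(node \<times> node) set" where
  "M3_edges =
     {(grp i j, U i) | i j. i \<in> {1,2,3} \<and> j \<in> {1,2,3}}
   \<union> {(U i, V i) | i. i \<in> {1,2,3}} \<union> {(U i, V 4) | i. i \<in> {1,2,3}}
   \<union> {(U i, V 5) | i. i \<in> {1,2,3}}
   \<union> {(V i, T j) | i j. 1 \<le> i \<and> i \<le> 5 \<and> 1 \<le> j \<and> j \<le> 27}"

definition extra_edges :: "(node \<times> node) set" where
  "extra_edges =
     {(Gb 3, T j) | j. j \<in> {7,8,9,16,17,18}}
   \<union> {(Ga 3, T j) | j. 19 \<le> j \<and> j \<le> 24}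
   \<union> {(Ga 1, T 25), (Gc 2, T 26), (Nb 1, T 25)}"

definition N2_edges :: "nat \<Rightarrow> (node \<times> node) set" where
  "N2_edges q = M3_edges \<union> char_edges q \<union> extra_edges"

text \<open>Demands.  T j (1 <= j <= 27) demands the j-th triple of G1 x G2 x G3 in lexicographic
order; Rho 1 demands x_{q'+2}; Rho i demands x_i (2 <= i <= q'+2); Rho (q'+3) demands x_1 = a.\<close>
definition N2_demands :: "nat \<Rightarrow> node \<Rightarrow> node set" where
  "N2_demands q v = (case v of
      T j \<Rightarrow> (if 1 \<le> j \<and> j \<le> 27
              then {Ga ((j - 1) div 9 + 1), Gb ((j - 1) div 3 mod 3 + 1), Gc ((j - 1) mod 3 + 1)}
              else {})
    | Rho i \<Rightarrow> (if i = 1 then {cx (q + 2)}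
                else if 2 \<le> i \<and> i \<le> q + 2 then {cx i}
                else if i = q + 3 then {cx 1}
                else {})
    | _ \<Rightarrow> {})"

end

theory Submission
  imports Defs
begin



lemma grp_set: "{grp i j |i j. i \<in> {1,2,3} \<and> j \<in> {1,2,3}} = {Ga 1, Ga 2, Ga 3, Gb 1, Gb 2, Gb 3, Gc 1, Gc 2, Gc 3}"
proof -
  have "{grp i j |i j. i \<in> {1,2,3} \<and> j \<in> {1,2,3}} = {grp 1 1, grp 1 2, grp 1 3, grp 2 1, grp 2 2, grp 2 3, grp 3 1, grp 3 2, grp 3 3}"
    by blast
  then show ?thesis by (simp add: grp_def)
qed

lemma N2_sources_eq: "N2_sources q = {Ga 1, Ga 2, Ga 3, Gb 1, Gb 2, Gb 3, Gc 1, Gc 2, Gc 3} \<union> {Xb i | i. 2 \<le> i \<and> i \<le> q + 2}"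
  unfolding N2_sources_def grp_set ..

lemma src_simps[simp]:
  "Ga j \<in> N2_sources q \<longleftrightarrow> j \<in> {1,2,3}"
  "Gb j \<in> N2_sources q \<longleftrightarrow> j \<in> {1,2,3}"
  "Gc j \<in> N2_sources q \<longleftrightarrow> j \<in> {1,2,3}"
  "Xb j \<in> N2_sources q \<longleftrightarrow> 2 \<le> j \<and> j \<le> q + 2"
  "U j \<notin> N2_sources q" "V j \<notin> N2_sources q" "T j \<notin> N2_sources q"
  "Mb j \<notin> N2_sources q" "Nb j \<notin> N2_sources q" "Rho j \<notin> N2_sources q"
  unfolding N2_sources_eq by auto

lemma into_U: "e \<in> N2_edges q \<Longrightarrow> snd e = U i \<Longrightarrow> i \<in> {1,2,3} \<and> (\<exists>j\<in>{1,2,3}. fst e = grp i j)"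
  unfolding N2_edges_def M3_edges_def char_edges_def extra_edges_def
  by (auto simp: grp_def cx_def)

lemma into_V: "e \<in> N2_edges q \<Longrightarrow> snd e = V i \<Longrightarrow> \<exists>k. fst e = U k \<and> (i \<le> 3 \<longrightarrow> k = i)"
  unfolding N2_edges_def M3_edges_def char_edges_def extra_edges_def
  by (auto simp: grp_def cx_def split: if_splits)

lemma into_Mb: "e \<in> N2_edges q \<Longrightarrow> snd e = Mb i \<Longrightarrow> fst e \<in> N2_sources q"
  unfolding N2_edges_def M3_edges_def char_edges_def extra_edges_def
  apply (auto simp: grp_def cx_def split: if_splits)
  done

lemma into_Nb: "e \<in> N2_edges q \<Longrightarrow> snd e = Nb i \<Longrightarrow> \<exists>k. fst e = Mb k"
  unfolding N2_edges_def M3_edges_def char_edges_def extra_edges_def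
  by (auto simp: grp_def cx_def split: if_splits)

lemma tails: "e \<in> N2_edges q \<Longrightarrow> fst e \<in> N2_sources q \<or> (\<exists>i. fst e = U i \<or> fst e = V i \<or> fst e = Mb i \<or> fst e = Nb i)"
  unfolding N2_edges_def M3_edges_def char_edges_def extra_edges_def
  apply (auto simp: grp_def cx_def split: if_splits)
  done

lemma into_T: "e \<in> N2_edges q \<Longrightarrow> snd e = T j \<Longrightarrow> j \<in> {1,2,5,6,10,11,14,15} \<Longrightarrow> \<exists>i\<in>{1,2,3,4,5}. fst e = V i"
  unfolding N2_edges_def M3_edges_def char_edges_def extra_edges_def
  by (auto simp: grp_def cx_def split: if_splits)



definition y0 :: "(node \<times> node \<Rightarrow> 'f::field^'d^'d) \<Rightarrow> (node \<Rightarrow> 'f^'d) \<Rightarrow> node \<times> node \<Rightarrow> 'f^'d"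
  where "y0 Asrc x e = Asrc e *v x (fst e)"

definition y1 :: "nat \<Rightarrow> (node \<times> node \<Rightarrow> 'f::field^'d^'d) \<Rightarrow> (node \<times> node \<Rightarrow> node \<times> node \<Rightarrow> 'f^'d^'d)
   \<Rightarrow> (node \<Rightarrow> 'f^'d) \<Rightarrow> node \<times> node \<Rightarrow> 'f^'d"
  where "y1 q Asrc Aint x e = (\<Sum>e'\<in>{e'\<in>N2_edges q. snd e' = fst e}. Aint e' e *v y0 Asrc x e')"

definition y2 :: "nat \<Rightarrow> (node \<times> node \<Rightarrow> 'f::field^'d^'d) \<Rightarrow> (node \<times> node \<Rightarrow> node \<times> node \<Rightarrow> 'f^'d^'d)
   \<Rightarrow> (node \<Rightarrow> 'f^'d) \<Rightarrow> node \<times> node \<Rightarrow> 'f^'d"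
  where "y2 q Asrc Aint x e = (\<Sum>e'\<in>{e'\<in>N2_edges q. snd e' = fst e}. Aint e' e *v y1 q Asrc Aint x e')"

definition lvl1 :: "node \<Rightarrow> bool" where "lvl1 n \<longleftrightarrow> (\<exists>i. n = U i \<or> n = Mb i)"

definition YY :: "nat \<Rightarrow> (node \<times> node \<Rightarrow> 'f::field^'d^'d) \<Rightarrow> (node \<times> node \<Rightarrow> node \<times> node \<Rightarrow> 'f^'d^'d)
   \<Rightarrow> (node \<Rightarrow> 'f^'d) \<Rightarrow> node \<times> node \<Rightarrow> 'f^'d"
  where "YY q Asrc Aint x e = (if fst e \<in> N2_sources q then y0 Asrc x e
      else if lvl1 (fst e) then y1 q Asrc Aint x e else y2 q Asrc Aint x e)"

lemma grp_src: "i \<in> {1,2,3} \<Longrightarrow> j \<in> {1,2,3} \<Longrightarrow> grp i j \<in> N2_sources q"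
  by (auto simp: grp_def)

lemma YY_eq: "vlnc_equations (N2_sources q) (N2_edges q) Asrc Aint x (YY q Asrc Aint x)"
  unfolding vlnc_equations_def
proof (intro conjI ballI impI)
  fix e assume "e \<in> N2_edges q" "fst e \<in> N2_sources q"
  then show "YY q Asrc Aint x e = Asrc e *v x (fst e)" by (simp add: YY_def y0_def)
next
  fix e assume e: "e \<in> N2_edges q" "fst e \<notin> N2_sources q"
  from tails[OF e(1)] e(2) obtain i where i: "fst e = U i \<or> fst e = V i \<or> fst e = Mb i \<or> fst e = Nb i"
    by blast
  show "YY q Asrc Aint x e = (\<Sum>e'\<in>{e'\<in>N2_edges q. snd e' = fst e}. Aint e' e *v YY q Asrc Aint x e')"
  proof (cases "lvl1 (fst e)")
    case True
    then have A: "YY q Asrc Aint x e = y1 q Asrc Aint x e" using e(2) by (simp add: YY_def)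
    show ?thesis unfolding A y1_def
    proof (rule sum.cong[OF refl])
      fix e' assume "e' \<in> {e'\<in>N2_edges q. snd e' = fst e}"
      then have e': "e' \<in> N2_edges q" "snd e' = fst e" by auto
      have "fst e' \<in> N2_sources q"
        using True e' into_U[OF e'(1)] into_Mb[OF e'(1)] grp_src unfolding lvl1_def by metis
      then show "Aint e' e *v y0 Asrc x e' = Aint e' e *v YY q Asrc Aint x e'" by (simp add: YY_def)
    qed
  next
    case False
    then have A: "YY q Asrc Aint x e = y2 q Asrc Aint x e" using e(2) by (simp add: YY_def)
    from False i have i2: "fst e = V i \<or> fst e = Nb i" unfolding lvl1_def by blast
    show ?thesis unfolding A y2_def
    proof (rule sum.cong[OF refl])
      fix e' assume "e' \<in> {e'\<in>N2_edges q. snd e' = fst e}"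
      then have e': "e' \<in> N2_edges q" "snd e' = fst e" by auto
      obtain k where "fst e' = U k \<or> fst e' = Mb k"
        using i2 e' into_V[OF e'(1)] into_Nb[OF e'(1)] by metis
      then have "fst e' \<notin> N2_sources q" "lvl1 (fst e')" unfolding lvl1_def by auto
      then show "Aint e' e *v y1 q Asrc Aint x e' = Aint e' e *v YY q Asrc Aint x e'" by (simp add: YY_def)
    qed
  qed
qed

lemma mv_lin: "(M::'f::field^'d^'d) *v (a *s u + b *s v) = a *s (M *v u) + b *s (M *v v)"
  by (simp add: matrix_vector_right_distrib vector_scalar_commute)

lemma y0_lin: "y0 Asrc (\<lambda>n. a *s x n + b *s z n) e = a *s y0 Asrc x e + b *s y0 Asrc z e"
  by (simp add: y0_def mv_lin)

lemma y1_lin: "y1 q Asrc Aint (\<lambda>n. a *s x n + b *s z n) e = a *s y1 q Asrc Aint x e + b *s y1 q Asrc Aint z e"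
  by (simp add: y1_def y0_lin mv_lin sum.distrib sum_cmul)

lemma y2_lin: "y2 q Asrc Aint (\<lambda>n. a *s x n + b *s z n) e = a *s y2 q Asrc Aint x e + b *s y2 q Asrc Aint z e"
  by (simp add: y2_def y1_lin mv_lin sum.distrib sum_cmul)

lemma YY_lin: "YY q Asrc Aint (\<lambda>n. a *s x n + b *s z n) e = a *s YY q Asrc Aint x e + b *s YY q Asrc Aint z e"
  by (simp add: YY_def y0_lin y1_lin y2_lin)

lemma YY_lin3: "YY q Asrc Aint (\<lambda>n. a *s x n + b *s z n + c *s w n) e
   = a *s YY q Asrc Aint x e + b *s YY q Asrc Aint z e + c *s YY q Asrc Aint w e"
proof -
  have "(\<lambda>n. a *s x n + b *s z n + c *s w n) = (\<lambda>n. 1 *s (\<lambda>n. a *s x n + b *s z n) n + c *s w n)"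
    by simp
  then show ?thesis by (simp only: YY_lin) simp
qed




definition grpset :: "nat \<Rightarrow> node set" where "grpset i = {grp i 1, grp i 2, grp i 3}"

lemma grpset_simps[simp]: "grpset 1 = {Ga 1, Ga 2, Ga 3}" "grpset 2 = {Gb 1, Gb 2, Gb 3}"
  "grpset 3 = {Gc 1, Gc 2, Gc 3}"
  by (simp_all add: grpset_def grp_def)

lemma grpset_Suc0[simp]: "grpset (Suc 0) = {Ga 1, Ga 2, Ga 3}"
  by (simp add: grpset_def grp_def)

definition supp :: "nat \<Rightarrow> (node \<Rightarrow> 'f::zero^'d) \<Rightarrow> bool" where
  "supp i x \<longleftrightarrow> (\<forall>n. n \<notin> grpset i \<longrightarrow> x n = 0)"

definition KK :: "nat \<Rightarrow> (node \<times> node \<Rightarrow> 'f::field^1^1) \<Rightarrow> (node \<times> node \<Rightarrow> node \<times> node \<Rightarrow> 'f^1^1)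
   \<Rightarrow> nat \<Rightarrow> node \<Rightarrow> bool" where
  "KK q Asrc Aint i p \<longleftrightarrow> (\<forall>x. supp i x \<longrightarrow> YY q Asrc Aint x (U i, V i) = 0 \<longrightarrow> x p = 0)"

lemma card_f2: "2 \<le> CARD('f::{field,finite})"
proof -
  have "card {0::'f, 1} = 2" by simp
  moreover have "card {0::'f, 1} \<le> CARD('f)" by (rule card_mono) auto
  ultimately show ?thesis by simp
qed

lemma not_inj3: "\<not> inj (\<Phi> :: 'f::{field,finite}\<times>'f\<times>'f \<Rightarrow> ('f^1) \<times> ('f^1))"
proof
  assume "inj \<Phi>"
  then have "card (UNIV :: ('f\<times>'f\<times>'f) set) \<le> card (UNIV :: (('f^1) \<times> ('f^1)) set)"
    by (rule card_inj_on_le) auto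
  then have "CARD('f) * (CARD('f) * CARD('f)) \<le> CARD('f) * CARD('f)"
    by (simp add: UNIV_Times_UNIV[symmetric] card_cartesian_product del: UNIV_Times_UNIV)
  moreover have "2 * (CARD('f) * CARD('f)) \<le> CARD('f) * (CARD('f) * CARD('f))"
    using card_f2[where 'f='f] by (intro mult_le_mono1) 
  moreover have "0 < CARD('f) * CARD('f)" using card_f2[where 'f='f] by simp
  ultimately show False by linarith
qed

lemma not_inj2: "\<not> inj (\<Phi> :: 'f::{field,finite}\<times>'f \<Rightarrow> 'f^1)"
proof
  assume "inj \<Phi>"
  then have "card (UNIV :: ('f\<times>'f) set) \<le> card (UNIV :: ('f^1) set)"
    by (rule card_inj_on_le) auto
  then have "CARD('f) * CARD('f) \<le> CARD('f)"
    by (simp add: UNIV_Times_UNIV[symmetric] card_cartesian_product del: UNIV_Times_UNIV)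
  moreover have "2 * CARD('f) \<le> CARD('f) * CARD('f)"
    using card_f2[where 'f='f] by (intro mult_le_mono1)
  moreover have "0 < CARD('f)" using card_f2[where 'f='f] by simp
  ultimately show False by linarith
qed

lemma grp_eq: "i \<in> {1,2,3} \<Longrightarrow> i' \<in> {1,2,3} \<Longrightarrow> grp i j = grp i' k \<Longrightarrow> i = i'"
  by (auto simp: grp_def split: if_splits)

lemma locality:
  assumes "i \<in> {1,2,3}" "i' \<in> {1,2,3}" "i' \<noteq> i" "supp i' x"
  shows "YY q Asrc Aint x (U i, V i) = 0"
proof -
  have "YY q Asrc Aint x (U i, V i) = y1 q Asrc Aint x (U i, V i)"
    by (simp add: YY_def lvl1_def)
  also have "\<dots> = 0" unfolding y1_def
  proof (rule sum.neutral, rule ballI)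
    fix e' assume "e' \<in> {e' \<in> N2_edges q. snd e' = fst (U i, V i)}"
    then have e': "e' \<in> N2_edges q" "snd e' = U i" by auto
    from into_U[OF e'] obtain j where j: "fst e' = grp i j" by blast
    have "fst e' \<notin> grpset i'"
    proof
      assume "fst e' \<in> grpset i'"
      then obtain k where "fst e' = grp i' k" unfolding grpset_def by blast
      with j grp_eq[OF assms(1,2)] assms(3) show False by metis
    qed
    with assms(4) have "x (fst e') = 0" unfolding supp_def by blast
    then show "Aint e' (U i, V i) *v y0 Asrc x e' = 0" by (simp add: y0_def)
  qed
  finally show ?thesis .
qed

lemma V_zero:
  assumes "k \<in> {1,2,3}" "YY q Asrc Aint x (U k, V k) = 0"
  shows "YY q Asrc Aint x (V k, t) = 0"
proof -
  have "YY q Asrc Aint x (V k, t) = y2 q Asrc Aint x (V k, t)"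
    by (simp add: YY_def lvl1_def)
  also have "\<dots> = 0" unfolding y2_def
  proof (rule sum.neutral, rule ballI)
    fix e' assume "e' \<in> {e' \<in> N2_edges q. snd e' = fst (V k, t)}"
    then have e': "e' \<in> N2_edges q" "snd e' = V k" by auto
    from into_V[OF e'] assms(1) have "fst e' = U k" by auto
    with e' have ee: "e' = (U k, V k)" by (metis prod.collapse)
    have "y1 q Asrc Aint x e' = YY q Asrc Aint x e'" using ee by (simp add: YY_def lvl1_def)
    then show "Aint e' (V k, t) *v y1 q Asrc Aint x e' = 0" using ee assms(2) by simp
  qed
  finally show ?thesis .
qed

lemma dem_simps:
  "N2_demands q (T 1) = {Ga 1, Gb 1, Gc 1}"
  "N2_demands q (T 2) = {Ga 1, Gb 1, Gc 2}"
  "N2_demands q (T 5) = {Ga 1, Gb 2, Gc 2}"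
  "N2_demands q (T 6) = {Ga 1, Gb 2, Gc 3}"
  "N2_demands q (T 10) = {Ga 2, Gb 1, Gc 1}"
  "N2_demands q (T 11) = {Ga 2, Gb 1, Gc 2}"
  "N2_demands q (T 14) = {Ga 2, Gb 2, Gc 2}"
  "N2_demands q (T 15) = {Ga 2, Gb 2, Gc 3}"
  by (simp_all add: N2_demands_def) (simp_all add: numeral_2_eq_2)




lemma hit:
  fixes Asrc :: "node \<times> node \<Rightarrow> 'f::{field,finite}^1^1"
  assumes sol: "vlnc_solution (N2_sources q) (N2_edges q) (N2_demands q) Asrc Aint B"
    and j: "j \<in> {1,2,5,6,10,11,14,15}"
    and dem: "p1 \<in> N2_demands q (T j)" "p2 \<in> N2_demands q (T j)" "p3 \<in> N2_demands q (T j)"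
    and g: "p1 \<in> grpset 1" "p2 \<in> grpset 2" "p3 \<in> grpset 3"
  shows "KK q Asrc Aint 1 p1 \<or> KK q Asrc Aint 2 p2 \<or> KK q Asrc Aint 3 p3"
proof (rule ccontr)
  assume "\<not> ?thesis"
  then obtain x1 x2 x3 :: "node \<Rightarrow> 'f^1" where
    x1: "supp 1 x1" "YY q Asrc Aint x1 (U 1, V 1) = 0" "x1 p1 \<noteq> 0" and
    x2: "supp 2 x2" "YY q Asrc Aint x2 (U 2, V 2) = 0" "x2 p2 \<noteq> 0" and
    x3: "supp 3 x3" "YY q Asrc Aint x3 (U 3, V 3) = 0" "x3 p3 \<noteq> 0"
    unfolding KK_def by blast
  have dec: "\<And>x v. v \<in> N2_demands q (T j) \<Longrightarrow>
      (\<Sum>e\<in>{e\<in>N2_edges q. snd e = T j}. B (T j) v e *v YY q Asrc Aint x e) = x v"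
    using sol YY_eq unfolding vlnc_solution_def by blast
  define X where "X l = (\<lambda>n. fst l *s x1 n + fst (snd l) *s x2 n + snd (snd l) *s x3 n)"
    for l :: "'f \<times> 'f \<times> 'f"
  have XU: "YY q Asrc Aint (X l) (U i, V i) = 0" if "i \<in> {1,2,3}" for l i
  proof -
    have "YY q Asrc Aint (X l) (U i, V i) = fst l *s YY q Asrc Aint x1 (U i, V i)
       + fst (snd l) *s YY q Asrc Aint x2 (U i, V i) + snd (snd l) *s YY q Asrc Aint x3 (U i, V i)"
      unfolding X_def by (rule YY_lin3)
    moreover have "YY q Asrc Aint x1 (U i, V i) = 0"
      using that x1 locality[of i 1 x1] by (cases "i = 1") auto
    moreover have "YY q Asrc Aint x2 (U i, V i) = 0"
      using that x2 locality[of i 2 x2] by (cases "i = 2") auto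
    moreover have "YY q Asrc Aint x3 (U i, V i) = 0"
      using that x3 locality[of i 3 x3] by (cases "i = 3") auto
    ultimately show ?thesis by simp
  qed
  define \<Phi> where "\<Phi> l = (YY q Asrc Aint (X l) (V 4, T j), YY q Asrc Aint (X l) (V 5, T j))"
    for l :: "'f \<times> 'f \<times> 'f"
  from not_inj3[of \<Phi>] obtain l l' where ll: "l \<noteq> l'" "\<Phi> l = \<Phi> l'"
    unfolding inj_def by blast
  have same: "YY q Asrc Aint (X l) e = YY q Asrc Aint (X l') e"
    if "e \<in> {e\<in>N2_edges q. snd e = T j}" for e
  proof -
    from that have e: "e \<in> N2_edges q" "snd e = T j" by auto
    from into_T[OF e j] obtain k where k: "k \<in> {1,2,3,4,5}" "fst e = V k" by blast
    then have ee: "e = (V k, T j)" using e by (metis prod.collapse)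
    show ?thesis
    proof (cases "k \<in> {1,2,3}")
      case True
      then show ?thesis using ee V_zero[OF True XU[OF True]] by simp
    next
      case False
      then have "k = 4 \<or> k = 5" using k by auto
      then show ?thesis using ee ll(2) unfolding \<Phi>_def by auto
    qed
  qed
  have XX: "X l v = X l' v" if "v \<in> N2_demands q (T j)" for v
  proof -
    have "X l v = (\<Sum>e\<in>{e\<in>N2_edges q. snd e = T j}. B (T j) v e *v YY q Asrc Aint (X l) e)"
      using dec[OF that] by simp
    also have "\<dots> = (\<Sum>e\<in>{e\<in>N2_edges q. snd e = T j}. B (T j) v e *v YY q Asrc Aint (X l') e)"
      using same by (intro sum.cong) auto
    also have "\<dots> = X l' v" using dec[OF that] by simp
    finally show ?thesis .
  qed
  have s1: "x2 p1 = 0" "x3 p1 = 0" using g x2(1) x3(1) unfolding supp_def by auto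
  have s2: "x1 p2 = 0" "x3 p2 = 0" using g x1(1) x3(1) unfolding supp_def by auto
  have s3: "x1 p3 = 0" "x2 p3 = 0" using g x1(1) x2(1) unfolding supp_def by auto
  have "fst l = fst l'" using XX[OF dem(1)] s1 x1(3) unfolding X_def by simp
  moreover have "fst (snd l) = fst (snd l')" using XX[OF dem(2)] s2 x2(3) unfolding X_def by simp
  moreover have "snd (snd l) = snd (snd l')" using XX[OF dem(3)] s3 x3(3) unfolding X_def by simp
  ultimately have "l = l'" by (simp add: prod_eq_iff)
  with ll(1) show False by simp
qed

lemma excl:
  fixes Asrc :: "node \<times> node \<Rightarrow> 'f::{field,finite}^1^1"
  assumes i: "i \<in> {1,2,3}" and p: "p \<in> grpset i" "p' \<in> grpset i" "p \<noteq> p'"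
    and K: "KK q Asrc Aint i p" "KK q Asrc Aint i p'"
  shows False
proof -
  define P where "P = (\<lambda>n. if n = p then vec 1 else (0::'f^1))"
  define P' where "P' = (\<lambda>n. if n = p' then vec 1 else (0::'f^1))"
  define X where "X l = (\<lambda>n. fst l *s P n + snd l *s P' n)" for l :: "'f \<times> 'f"
  define \<Phi> where "\<Phi> l = YY q Asrc Aint (X l) (U i, V i)" for l
  have Phi: "\<Phi> l = fst l *s YY q Asrc Aint P (U i, V i) + snd l *s YY q Asrc Aint P' (U i, V i)" for l
    unfolding \<Phi>_def X_def by (rule YY_lin)
  from not_inj2[of \<Phi>] obtain l l' where ll: "l \<noteq> l'" "\<Phi> l = \<Phi> l'"
    unfolding inj_def by blast
  define Z where "Z = X (fst l - fst l', snd l - snd l')"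
  have "YY q Asrc Aint Z (U i, V i) = \<Phi> l - \<Phi> l'"
    unfolding Z_def \<Phi>_def[symmetric] Phi by (simp add: vector_sub_rdistrib algebra_simps)
  then have Z0: "YY q Asrc Aint Z (U i, V i) = 0" using ll(2) by simp
  have sZ: "supp i Z" unfolding supp_def Z_def X_def P_def P'_def using p by auto
  have v1: "vec 1 \<noteq> (0::'f^1)" by (simp add: vec_eq_iff)
  have "Z p = 0" using K(1) Z0 sZ unfolding KK_def by blast
  then have a: "fst l = fst l'" using p(3) v1 unfolding Z_def X_def P_def P'_def by simp
  have "Z p' = 0" using K(2) Z0 sZ unfolding KK_def by blast
  then have b: "snd l = snd l'" using p(3) v1 unfolding Z_def X_def P_def P'_def by simp
  from a b ll(1) show False by (simp add: prod_eq_iff)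
qed

theorem lemma8:
  fixes q :: nat
  assumes "q \<ge> 2"
  shows "\<not> vlnc_solvable (N2_sources q) (N2_edges q) (N2_demands q)
            TYPE('f::{field,finite}) TYPE(1)"
proof
  assume "vlnc_solvable (N2_sources q) (N2_edges q) (N2_demands q) TYPE('f::{field,finite}) TYPE(1)"
  then obtain Asrc :: "node \<times> node \<Rightarrow> 'f^1^1" and Aint B where
    sol: "vlnc_solution (N2_sources q) (N2_edges q) (N2_demands q) Asrc Aint B"
    unfolding vlnc_solvable_def by blast
  let ?K = "KK q Asrc Aint"
  have h: "?K 1 p1 \<or> ?K 2 p2 \<or> ?K 3 p3"
    if "j \<in> {1,2,5,6,10,11,14,15}" "N2_demands q (T j) = {p1, p2, p3}"
      "p1 \<in> grpset 1" "p2 \<in> grpset 2" "p3 \<in> grpset 3" for j p1 p2 p3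
    using hit[OF sol that(1)] that(2-) by simp
  have t1: "?K 1 (Ga 1) \<or> ?K 2 (Gb 1) \<or> ?K 3 (Gc 1)" by (rule h[of 1]) (simp_all add: dem_simps dem_simps[simplified])
  have t2: "?K 1 (Ga 1) \<or> ?K 2 (Gb 1) \<or> ?K 3 (Gc 2)" by (rule h[of 2]) (simp_all add: dem_simps dem_simps[simplified])
  have t5: "?K 1 (Ga 1) \<or> ?K 2 (Gb 2) \<or> ?K 3 (Gc 2)" by (rule h[of 5]) (simp_all add: dem_simps dem_simps[simplified])
  have t6: "?K 1 (Ga 1) \<or> ?K 2 (Gb 2) \<or> ?K 3 (Gc 3)" by (rule h[of 6]) (simp_all add: dem_simps dem_simps[simplified])
  have t10: "?K 1 (Ga 2) \<or> ?K 2 (Gb 1) \<or> ?K 3 (Gc 1)" by (rule h[of 10]) (simp_all add: dem_simps dem_simps[simplified])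
  have t11: "?K 1 (Ga 2) \<or> ?K 2 (Gb 1) \<or> ?K 3 (Gc 2)" by (rule h[of 11]) (simp_all add: dem_simps dem_simps[simplified])
  have t14: "?K 1 (Ga 2) \<or> ?K 2 (Gb 2) \<or> ?K 3 (Gc 2)" by (rule h[of 14]) (simp_all add: dem_simps dem_simps[simplified])
  have t15: "?K 1 (Ga 2) \<or> ?K 2 (Gb 2) \<or> ?K 3 (Gc 3)" by (rule h[of 15]) (simp_all add: dem_simps dem_simps[simplified])
  have e1: "\<not> (?K 1 (Ga 1) \<and> ?K 1 (Ga 2))" using excl[of 1 "Ga 1" "Ga 2" q Asrc Aint] by auto
  have e2: "\<not> (?K 2 (Gb 1) \<and> ?K 2 (Gb 2))" using excl[of 2 "Gb 1" "Gb 2" q Asrc Aint] by auto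
  have e3: "\<not> (?K 3 (Gc 1) \<and> ?K 3 (Gc 2))" using excl[of 3 "Gc 1" "Gc 2" q Asrc Aint] by auto
  have e4: "\<not> (?K 3 (Gc 2) \<and> ?K 3 (Gc 3))" using excl[of 3 "Gc 2" "Gc 3" q Asrc Aint] by auto
  have e5: "\<not> (?K 3 (Gc 1) \<and> ?K 3 (Gc 3))" using excl[of 3 "Gc 1" "Gc 3" q Asrc Aint] by auto
  from t1 t2 t5 t6 t10 t11 t14 t15 e1 e2 e3 e4 e5 show False by blast
qed


end
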